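(* Let $c>0$ be a constant and let $\mathcal{F}$ be a finite nice family of sets in the plane such that every subfamily $\mathcal{F}'\subseteq\mathcal{F}$ has union complexity at most $c|\mathcal{F}'|$. Then the intersection graph of $\mathcal{F}$ has at most \[ \Big(\big(\tfrac{ce}{2}+1\big)\omega(\mathcal{F})-1\Big)|\mathcal{F}| \] edges, where $e$ is the base of the natural logarithm.
   Context: A family $\mathcal{F}$ of sets in the plane is called nice if every member of $\mathcal{F}$ is a region bounded by a simple closed Jordan curve and these boundary curves are in general position: any two of them cross in only finitely many points (two curves $\alpha,\beta$ cross at a point if $\alpha$ passes from one side of $\beta$ to the other there), no two curves touch or overlap, and no three curves pass through a common point. The union complexity of a family is the number of intersection points of boundaries of two (or more) members of the family that lie on the boundary of the union of all members of the family. The intersection graph of $\mathcal{F}$ has vertex set $\mathcal{F}$, two members being adjacent iff they intersect. $\omega(\mathcal{F})$ denotes the clique number of this intersection graph (the maximum number of pairwise intersecting members). *)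

theory Defs
  imports "HOL-Analysis.Analysis"
begin

text \<open>The plane is modelled as the complex plane. A Jordan region is a closed region bounded by
a simple closed curve: the curve together with its inside.\<close>

definition jordan_region :: "complex set \<Rightarrow> bool" where
  "jordan_region S \<longleftrightarrow> (\<exists>g. simple_path g \<and> pathfinish g = pathstart g \<and>
      S = path_image g \<union> inside (path_image g))"

text \<open>The curve A crosses the curve B at p: running along a (periodically extended) simple closed
parametrisation g of A through p, just before p the curve lies on one side of B and just after p on
the other side.\<close>

definition curve_crosses_at :: "complex set \<Rightarrow> complex set \<Rightarrow> complex \<Rightarrow> bool" where
  "curve_crosses_at A B p \<longleftrightarrow>
     (\<exists>g t. simple_path g \<and> pathfinish g = pathstart g \<and> path_image g = A \<and>
        t \<in> {0..<1} \<and> g t = p \<and>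
        (\<exists>\<delta>>0.
           ((\<forall>s. t - \<delta> < s \<and> s < t \<longrightarrow> g (frac s) \<in> inside B) \<and>
            (\<forall>s. t < s \<and> s < t + \<delta> \<longrightarrow> g (frac s) \<in> outside B)) \<or>
           ((\<forall>s. t - \<delta> < s \<and> s < t \<longrightarrow> g (frac s) \<in> outside B) \<and>
            (\<forall>s. t < s \<and> s < t + \<delta> \<longrightarrow> g (frac s) \<in> inside B))))"

definition nice_family :: "complex set set \<Rightarrow> bool" where
  "nice_family F \<longleftrightarrow>
     (\<forall>S\<in>F. jordan_region S) \<and>
     (\<forall>S\<in>F. \<forall>T\<in>F. S \<noteq> T \<longrightarrow>
        finite (frontier S \<inter> frontier T) \<and>
        (\<forall>p \<in> frontier S \<inter> frontier T. curve_crosses_at (frontier S) (frontier T) p)) \<and>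
     (\<forall>S\<in>F. \<forall>T\<in>F. \<forall>U\<in>F. S \<noteq> T \<and> S \<noteq> U \<and> T \<noteq> U \<longrightarrow>
        frontier S \<inter> frontier T \<inter> frontier U = {})"

definition union_complexity :: "complex set set \<Rightarrow> nat" where
  "union_complexity F = card {p. (\<exists>S\<in>F. \<exists>T\<in>F. S \<noteq> T \<and> p \<in> frontier S \<and> p \<in> frontier T)
                               \<and> p \<in> frontier (\<Union>F)}"

definition intersection_edges :: "'a set set \<Rightarrow> 'a set set set" where
  "intersection_edges F = {{S, T} | S T. S \<in> F \<and> T \<in> F \<and> S \<noteq> T \<and> S \<inter> T \<noteq> {}}"

definition clique_number :: "'a set set \<Rightarrow> nat" where
  "clique_number F = Max {card K | K. K \<subseteq> F \<and> (\<forall>S\<in>K. \<forall>T\<in>K. S \<inter> T \<noteq> {})}"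

end

theory Submission
  imports Defs
begin

lemma jr_facts:
  assumes "jordan_region S"
  shows "S = - outside (frontier S)" "closed S" "connected S" "connected (frontier S)"
    "frontier S \<noteq> {}" "open (outside (frontier S))" "frontier S \<subseteq> S"
    "frontier (outside (frontier S)) = frontier S" "S \<noteq> {}"
    "connected (outside (frontier S))" "bounded S" "\<not> bounded (outside (frontier S))"
proof -
  obtain g where g: "simple_path g" "pathfinish g = pathstart g"
    "S = path_image g \<union> inside (path_image g)"
    using assms unfolding jordan_region_def by blast
  note J = Jordan_inside_outside[OF g(1,2)]
  have S: "S = - outside (path_image g)" using g(3) by (simp add: union_with_inside)
  have fr: "frontier S = path_image g"
    using S J by (simp add: frontier_complement)
  show "S = - outside (frontier S)" using S fr by simp
  show "closed S" using S J by (simp add: closed_Compl)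
  have "S = closure (inside (path_image g))"
    using g(3) J by (simp add: closure_Un_frontier Un_commute)
  then show "connected S" using J connected_imp_connected_closure by metis
  show "connected (frontier S)" using fr g(1) by (simp add: simple_path_imp_path connected_path_image)
  show "frontier S \<noteq> {}" using fr by (simp add: path_image_nonempty)
  show "open (outside (frontier S))" using fr J by simp
  show "frontier S \<subseteq> S" using fr g(3) by simp
  show "frontier (outside (frontier S)) = frontier S" using fr J by simp
  show "S \<noteq> {}" using fr g(3) by (auto simp: path_image_nonempty)
  show "connected (outside (frontier S))" using fr J by simp
  show "\<not> bounded (outside (frontier S))" using fr J by simp
  show "bounded S" using g(3) J bounded_simple_path_image[OF g(1)] by simp
qed

lemma conn_outside:
  assumes "connected C" "C \<inter> B = {}" "C \<inter> outside B \<noteq> {}"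
  shows "C \<subseteq> outside B"
proof
  fix x assume x: "x \<in> C"
  show "x \<in> outside B"
  proof (rule ccontr)
    assume "x \<notin> outside B"
    then have "x \<in> inside B" using x assms(2) inside_Un_outside by blast
    then have "inside B \<inter> C \<noteq> {}" using x by blast
    then show False using inside_outside_intersect_connected[OF assms(1)] assms(2,3) by blast
  qed
qed

lemma nested:
  assumes "jordan_region S" "jordan_region T" "S \<inter> T \<noteq> {}" "frontier S \<inter> frontier T = {}"
  shows "S \<subseteq> T \<or> T \<subseteq> S"
proof -
  note fS = jr_facts[OF assms(1)] and fT = jr_facts[OF assms(2)]
  have a: "S \<subseteq> T" if "frontier S \<subseteq> T" "jordan_region S" "jordan_region T"
     "frontier S \<inter> frontier T = {}" for S T
  proof -
    note fS = jr_facts[OF that(2)] and fT = jr_facts[OF that(3)]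
    have d: "outside (frontier T) \<inter> frontier S = {}" using that(1) fT(1) by blast
    have "outside (frontier T) \<inter> outside (frontier S) \<noteq> {}"
    proof
      assume "outside (frontier T) \<inter> outside (frontier S) = {}"
      then have "outside (frontier T) \<subseteq> S" using fS(1) by blast
      then show False using fS(11) fT(12) bounded_subset by blast
    qed
    then have "outside (frontier T) \<subseteq> outside (frontier S)"
      using conn_outside[OF fT(10)] d by blast
    then show ?thesis using fS(1) fT(1) by blast
  qed
  show ?thesis
  proof (rule ccontr)
    assume nn: "\<not> (S \<subseteq> T \<or> T \<subseteq> S)"
    have s1: "frontier S \<subseteq> outside (frontier T)"
    proof (cases "frontier S \<inter> outside (frontier T) = {}")
      case True
      then have "frontier S \<subseteq> T" using fT(1) by blast
      then show ?thesis using a assms nn by blast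
    qed (use conn_outside[OF fS(4)] assms(4) in blast)
    have s2: "frontier T \<subseteq> outside (frontier S)"
    proof (cases "frontier T \<inter> outside (frontier S) = {}")
      case True
      then have "frontier T \<subseteq> S" using fS(1) by blast
      then show ?thesis using a assms nn by blast
    qed (use conn_outside[OF fT(4)] assms(4) in blast)
    have "T \<inter> frontier S = {}" using s1 fT(1) by blast
    moreover have "T \<inter> outside (frontier S) \<noteq> {}" using s2 fT(5) fT(7) by blast
    ultimately have "T \<subseteq> outside (frontier S)" using conn_outside[OF fT(3)] by blast
    then show False using assms(3) fS(1) by blast
  qed
qed

lemma side_pts:
  assumes g: "simple_path g" and t: "0 \<le> t" "t < 1" and d: "\<delta> > 0"
    and cl: "pathfinish g = pathstart g"
    and X: "\<And>s. t - \<delta> < s \<Longrightarrow> s < t \<Longrightarrow> g (frac s) \<in> X"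
    and Y: "\<And>s. t < s \<Longrightarrow> s < t + \<delta> \<Longrightarrow> g (frac s) \<in> Y"
    and e: "e > 0"
  shows "\<exists>s\<in>{0..1}. s \<noteq> t \<and> \<not> (t = 0 \<and> s = 1) \<and> dist (g s) (g t) < e \<and> g s \<in> Y"
    "\<exists>s\<in>{0..1}. s \<noteq> t \<and> \<not> (t = 0 \<and> s = 1) \<and> dist (g s) (g t) < e \<and> g s \<in> X"
proof -
  have co: "continuous_on {0..1} g" using g using simple_path_imp_path path_def by blast
  have g01: "g 1 = g 0" using cl by (simp add: pathfinish_def pathstart_def)
  obtain d1 where d1: "d1 > 0" "\<And>s. s \<in> {0..1} \<Longrightarrow> dist s t < d1 \<Longrightarrow> dist (g s) (g t) < e"
    using co e t unfolding continuous_on_iff by (metis atLeastAtMost_iff less_eq_real_def)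
  obtain d2 where d2: "d2 > 0" "\<And>s. s \<in> {0..1} \<Longrightarrow> dist s 1 < d2 \<Longrightarrow> dist (g s) (g 1) < e"
    using co e unfolding continuous_on_iff by (metis atLeastAtMost_iff order_refl zero_le_one)
  define m where "m = min (min d1 \<delta>) (1 - t) / 2"
  have m: "m > 0" "m < d1" "m < \<delta>" "m < 1 - t" using d1 d t by (auto simp: m_def)
  have f1: "frac (t + m) = t + m" using m t by (simp add: frac_eq)
  show "\<exists>s\<in>{0..1}. s \<noteq> t \<and> \<not> (t = 0 \<and> s = 1) \<and> dist (g s) (g t) < e \<and> g s \<in> Y"
    apply (rule bexI[of _ "t + m"])
    using m t d1(2)[of "t+m"] Y[of "t+m"] f1 by (auto simp: dist_real_def)
  show "\<exists>s\<in>{0..1}. s \<noteq> t \<and> \<not> (t = 0 \<and> s = 1) \<and> dist (g s) (g t) < e \<and> g s \<in> X"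
  proof (cases "t = 0")
    case True
    define k where "k = min (min d2 \<delta>) 1 / 2"
    have k: "k > 0" "k < d2" "k < \<delta>" "k \<le> 1/2" using d2 d by (auto simp: k_def)
    have fl: "floor (- k) = -1" using k by (simp add: floor_eq_iff)
    have f2: "frac (- k) = 1 - k" using fl by (simp add: frac_def)
    show ?thesis
      apply (rule bexI[of _ "1 - k"])
      using k True d2(2)[of "1-k"] X[of "-k"] f2 g01 by (auto simp: dist_real_def)
  next
    case False
    define k where "k = min (min d1 \<delta>) t / 2"
    have k: "k > 0" "k < d1" "k < \<delta>" "k < t" using d1 d t False by (auto simp: k_def)
    have f2: "frac (t - k) = t - k" using k t by (simp add: frac_eq)
    show ?thesis
      apply (rule bexI[of _ "t - k"])
      using k t d1(2)[of "t-k"] X[of "t-k"] f2 by (auto simp: dist_real_def)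
  qed
qed

lemma cross_facts:
  assumes "curve_crosses_at A B p"
  shows "\<exists>g t. simple_path g \<and> pathfinish g = pathstart g \<and> path_image g = A \<and>
     0 \<le> t \<and> t < 1 \<and> g t = p \<and>
     (\<forall>e>0. \<exists>s\<in>{0..1}. s \<noteq> t \<and> \<not> (t = 0 \<and> s = 1) \<and> dist (g s) p < e \<and> g s \<in> outside B) \<and>
     (\<forall>e>0. \<exists>s\<in>{0..1}. s \<noteq> t \<and> \<not> (t = 0 \<and> s = 1) \<and> dist (g s) p < e \<and> g s \<in> inside B)"
proof -
  obtain g t \<delta> where g: "simple_path g" "pathfinish g = pathstart g" "path_image g = A"
    "t \<in> {0..<1}" "g t = p" "\<delta> > 0" and
    c: "((\<forall>s. t - \<delta> < s \<and> s < t \<longrightarrow> g (frac s) \<in> inside B) \<and>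
            (\<forall>s. t < s \<and> s < t + \<delta> \<longrightarrow> g (frac s) \<in> outside B)) \<or>
           ((\<forall>s. t - \<delta> < s \<and> s < t \<longrightarrow> g (frac s) \<in> outside B) \<and>
            (\<forall>s. t < s \<and> s < t + \<delta> \<longrightarrow> g (frac s) \<in> inside B))"
    using assms unfolding curve_crosses_at_def by blast
  have t: "0 \<le> t" "t < 1" using g(4) by auto
  from c show ?thesis
  proof
    assume h: "(\<forall>s. t - \<delta> < s \<and> s < t \<longrightarrow> g (frac s) \<in> inside B) \<and>
            (\<forall>s. t < s \<and> s < t + \<delta> \<longrightarrow> g (frac s) \<in> outside B)"
    have o: "\<forall>e>0. \<exists>s\<in>{0..1}. s \<noteq> t \<and> \<not> (t = 0 \<and> s = 1) \<and> dist (g s) p < e \<and> g s \<in> outside B"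
      using side_pts(1)[OF g(1) t g(6) g(2), of "inside B" "outside B"] h g(5) by simp
    have i: "\<forall>e>0. \<exists>s\<in>{0..1}. s \<noteq> t \<and> \<not> (t = 0 \<and> s = 1) \<and> dist (g s) p < e \<and> g s \<in> inside B"
      using side_pts(2)[OF g(1) t g(6) g(2), of "inside B" "outside B"] h g(5) by simp
    show ?thesis by (rule exI[of _ g], rule exI[of _ t]) (use g t o i in simp)
  next
    assume h: "(\<forall>s. t - \<delta> < s \<and> s < t \<longrightarrow> g (frac s) \<in> outside B) \<and>
            (\<forall>s. t < s \<and> s < t + \<delta> \<longrightarrow> g (frac s) \<in> inside B)"
    have o: "\<forall>e>0. \<exists>s\<in>{0..1}. s \<noteq> t \<and> \<not> (t = 0 \<and> s = 1) \<and> dist (g s) p < e \<and> g s \<in> outside B"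
      using side_pts(2)[OF g(1) t g(6) g(2), of "outside B" "inside B"] h g(5) by simp
    have i: "\<forall>e>0. \<exists>s\<in>{0..1}. s \<noteq> t \<and> \<not> (t = 0 \<and> s = 1) \<and> dist (g s) p < e \<and> g s \<in> inside B"
      using side_pts(1)[OF g(1) t g(6) g(2), of "outside B" "inside B"] h g(5) by simp
    show ?thesis by (rule exI[of _ g], rule exI[of _ t]) (use g t o i in simp)
  qed
qed

lemma cross_two:
  assumes "curve_crosses_at A B p" "A \<inter> B \<subseteq> {p}"
  shows False
proof -
  obtain g t where g: "simple_path g" "pathfinish g = pathstart g" "path_image g = A"
     "0 \<le> t" "t < 1" "g t = p" and
    o: "\<forall>e>0. \<exists>s\<in>{0..1}. s \<noteq> t \<and> \<not> (t = 0 \<and> s = 1) \<and> dist (g s) p < e \<and> g s \<in> outside B" and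
    i: "\<forall>e>0. \<exists>s\<in>{0..1}. s \<noteq> t \<and> \<not> (t = 0 \<and> s = 1) \<and> dist (g s) p < e \<and> g s \<in> inside B"
    using cross_facts[OF assms(1)] by blast
  define D where "D = {s\<in>{0..1}. s \<noteq> t \<and> \<not> (t = 0 \<and> s = 1)}"
  have co: "continuous_on {0..1} g" using g(1) simple_path_imp_path path_def by blast
  have g01: "g 1 = g 0" using g(2) by (simp add: pathfinish_def pathstart_def)
  have lf: "loop_free g" using g(1) simple_path_def by blast
  have conn: "connected (g ` D)"
  proof (cases "t = 0")
    case True
    then have "D = {0<..<1}" using D_def by auto
    moreover have "continuous_on {0<..<1} g" using co by (rule continuous_on_subset) auto
    ultimately show ?thesis using connected_continuous_image connected_Ioo by metis
  next
    case False
    then have "D = {0..<t} \<union> {t<..1}" using D_def g(4,5) by auto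
    then have e: "g ` D = g ` {0..<t} \<union> g ` {t<..1}" by auto
    have c1: "connected (g ` {0..<t})"
      using g(5) by (intro connected_continuous_image[OF continuous_on_subset[OF co]]) auto
    have c2: "connected (g ` {t<..1})"
      using g(4) by (intro connected_continuous_image[OF continuous_on_subset[OF co]]) auto
    have "g 0 \<in> g ` {0..<t}" using False g(4) by auto
    moreover have "g 0 \<in> g ` {t<..1}" using g(5) g01 by (metis greaterThanAtMost_iff image_eqI order_refl)
    ultimately have "g ` {0..<t} \<inter> g ` {t<..1} \<noteq> {}" by blast
    then show ?thesis using e c1 c2 connected_Un by metis
  qed
  have "g ` D \<inter> B = {}"
  proof -
    have "g ` D \<subseteq> A" using g(3) D_def by (auto simp: path_image_def)
    moreover have "p \<notin> g ` D"
    proof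
      assume "p \<in> g ` D"
      then obtain s where s: "s \<in> D" "g s = g t" using g(6) by auto
      have "s \<in> {0..1}" "t \<in> {0..1}" using s(1) g(4,5) D_def by auto
      then have "s = t \<or> s = 0 \<and> t = 1 \<or> s = 1 \<and> t = 0" using lf s(2) unfolding loop_free_def by blast
      then show False using s(1) g(5) D_def by auto
    qed
    ultimately show ?thesis using assms(2) by blast
  qed
  moreover obtain s1 where "s1 \<in> D" "g s1 \<in> outside B"
  proof -
    obtain s where "s \<in> {0..1}" "s \<noteq> t \<and> \<not> (t = 0 \<and> s = 1) \<and> g s \<in> outside B" using o[rule_format, of 1] by auto
    then show ?thesis using that D_def by blast
  qed
  moreover obtain s2 where "s2 \<in> D" "g s2 \<in> inside B"
  proof -
    obtain s where "s \<in> {0..1}" "s \<noteq> t \<and> \<not> (t = 0 \<and> s = 1) \<and> g s \<in> inside B" using i[rule_format, of 1] by auto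
    then show ?thesis using that D_def by blast
  qed
  ultimately have "inside B \<inter> g ` D \<noteq> {}" "outside B \<inter> g ` D \<noteq> {}" by blast+
  then have "B \<inter> g ` D \<noteq> {}" using inside_outside_intersect_connected[OF conn] by blast
  then show False using \<open>g ` D \<inter> B = {}\<close> by blast
qed

lemma cross_out:
  assumes "jordan_region S" "jordan_region T" "curve_crosses_at (frontier S) (frontier T) p" "e > 0"
  shows "\<exists>y. dist y p < e \<and> y \<notin> S \<and> y \<notin> T"
proof -
  note fS = jr_facts[OF assms(1)] and fT = jr_facts[OF assms(2)]
  obtain g t where g: "path_image g = frontier S" and
    o: "\<forall>e>0. \<exists>s\<in>{0..1}. s \<noteq> t \<and> \<not> (t = 0 \<and> s = 1) \<and> dist (g s) p < e \<and> g s \<in> outside (frontier T)"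
    using cross_facts[OF assms(3)] by blast
  obtain s where s: "s \<in> {0..1}" "dist (g s) p < e/2" "g s \<in> outside (frontier T)"
    using o[rule_format, of "e/2"] assms(4) by auto
  define q where "q = g s"
  have qS: "q \<in> frontier S" using g s(1) q_def by (auto simp: path_image_def)
  obtain r where r: "r > 0" "ball q r \<subseteq> outside (frontier T)"
    using fT(6) s(3) q_def open_contains_ball by blast
  have "q \<in> closure (outside (frontier S))" using qS fS(8) frontier_def by (metis Diff_iff)
  then obtain y where y: "y \<in> outside (frontier S)" "dist y q < min r (e/2)"
    using r assms(4) closure_approachable by (metis half_gt_zero min_less_iff_conj)
  have "y \<notin> S" using y(1) fS(1) by blast
  moreover have "y \<in> outside (frontier T)" using y(2) r by (auto simp: dist_commute)
  then have "y \<notin> T" using fT(1) by blast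
  moreover have "dist y p < e" using y(2) s(2) q_def dist_triangle[of y p q] by (simp add: dist_commute)
  ultimately show ?thesis by blast
qed

lemma cross_union:
  assumes "finite R" "\<And>U. U \<in> R \<Longrightarrow> jordan_region U" "S \<in> R" "T \<in> R"
    "p \<in> frontier S" "curve_crosses_at (frontier S) (frontier T) p"
    "\<And>U. U \<in> R \<Longrightarrow> p \<in> U \<Longrightarrow> U = S \<or> U = T"
  shows "p \<in> frontier (\<Union>R)"
proof -
  have pS: "p \<in> S" using assms(5) jr_facts(7)[OF assms(2)[OF assms(3)]] by blast
  then have "p \<in> closure (\<Union>R)" using assms(3) closure_subset by blast
  moreover have "p \<notin> interior (\<Union>R)"
  proof
    assume "p \<in> interior (\<Union>R)"
    then obtain e where e: "e > 0" "ball p e \<subseteq> \<Union>R" using mem_interior by blast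
    define K where "K = \<Union>(R - {S, T})"
    have "closed K" unfolding K_def using assms(1,2) jr_facts(2)
      by (intro closed_Union) auto
    moreover have "p \<notin> K" using assms(7) K_def by blast
    ultimately obtain e' where e': "e' > 0" "ball p e' \<inter> K = {}"
      using open_contains_ball[of "- K"] by (metis Compl_iff disjoint_eq_subset_Compl open_Compl)
    obtain y where y: "dist y p < min e e'" "y \<notin> S" "y \<notin> T"
      using cross_out[OF assms(2)[OF assms(3)] assms(2)[OF assms(4)] assms(6), of "min e e'"] e e' by auto
    have "y \<in> ball p e" "y \<in> ball p e'" using y(1) by (auto simp: dist_commute)
    then show False using e(2) e'(2) y K_def by blast
  qed
  ultimately show ?thesis by (simp add: frontier_def)
qed

lemma wsum:
  fixes q :: real
  assumes "finite F" "A \<subseteq> F" "B \<subseteq> F" "A \<inter> B = {}"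
  shows "(\<Sum>R\<in>Pow F. q ^ card R * (1 - q) ^ card (F - R) * (if A \<subseteq> R \<and> B \<inter> R = {} then 1 else 0))
         = q ^ card A * (1 - q) ^ card B"
proof -
  define f1 where "f1 x = (if x \<in> B then 0 else q)" for x
  define f2 where "f2 x = (if x \<in> A then 0 else 1 - q)" for x
  have fin: "finite A" "finite B" using assms finite_subset by metis+
  have p1: "(\<Prod>x\<in>X. f1 x) = (if B \<inter> X = {} then q ^ card X else 0)" if "X \<subseteq> F" for X
  proof -
    have fX: "finite X" using that assms(1) finite_subset by auto
    show ?thesis
    proof (cases "B \<inter> X = {}")
      case True
      then have "(\<Prod>x\<in>X. f1 x) = (\<Prod>x\<in>X. q)" by (intro prod.cong) (auto simp: f1_def)
      then show ?thesis using True by simp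
    next
      case False
      then obtain x where "x \<in> X" "x \<in> B" by blast
      then show ?thesis using False fX by (auto simp: f1_def intro!: prod_zero)
    qed
  qed
  have p2: "(\<Prod>x\<in>F - X. f2 x) = (if A \<subseteq> X then (1 - q) ^ card (F - X) else 0)" if "X \<subseteq> F" for X
  proof (cases "A \<subseteq> X")
    case True
    then have "(\<Prod>x\<in>F - X. f2 x) = (\<Prod>x\<in>F - X. 1 - q)" by (intro prod.cong) (auto simp: f2_def)
    then show ?thesis using True by simp
  next
    case False
    then obtain x where "x \<in> A" "x \<notin> X" by blast
    then show ?thesis using False assms by (auto simp: f2_def intro!: prod_zero)
  qed
  have "(\<Prod>x\<in>F. f1 x + f2 x) = (\<Sum>X\<in>Pow F. (\<Prod>x\<in>X. f1 x) * (\<Prod>x\<in>F-X. f2 x))"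
    by (rule prod_add[OF assms(1)])
  also have "\<dots> = (\<Sum>R\<in>Pow F. q ^ card R * (1 - q) ^ card (F - R) * (if A \<subseteq> R \<and> B \<inter> R = {} then 1 else 0))"
    by (intro sum.cong refl) (auto simp: p1 p2 Int_commute)
  finally have e1: "(\<Prod>x\<in>F. f1 x + f2 x) = (\<Sum>R\<in>Pow F. q ^ card R * (1 - q) ^ card (F - R) * (if A \<subseteq> R \<and> B \<inter> R = {} then 1 else 0))" .
  define h where "h x = f1 x + f2 x" for x
  have "(\<Prod>x\<in>F. h x) = (\<Prod>x\<in>F - A. h x) * (\<Prod>x\<in>A. h x)"
    using prod.subset_diff[OF assms(2,1)] by simp
  also have "(\<Prod>x\<in>F - A. h x) = (\<Prod>x\<in>F - A - B. h x) * (\<Prod>x\<in>B. h x)"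
    using prod.subset_diff[of B "F - A" h] assms by auto
  also have "(\<Prod>x\<in>F - A - B. h x) = 1" by (intro prod.neutral) (auto simp: h_def f1_def f2_def)
  also have "(\<Prod>x\<in>B. h x) = (1 - q) ^ card B"
  proof -
    have "(\<Prod>x\<in>B. h x) = (\<Prod>x\<in>B. 1 - q)" using assms(4) by (intro prod.cong) (auto simp: h_def f1_def f2_def)
    then show ?thesis by simp
  qed
  also have "(\<Prod>x\<in>A. h x) = q ^ card A"
  proof -
    have "(\<Prod>x\<in>A. h x) = (\<Prod>x\<in>A. q)" using assms(4) by (intro prod.cong) (auto simp: h_def f1_def f2_def)
    then show ?thesis by simp
  qed
  finally show ?thesis using e1 h_def by (simp add: mult.commute)
qed

lemma exp_bound:
  fixes m :: nat assumes "m \<ge> 1"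
  shows "exp (-1) \<le> (1 - 1 / real m) ^ (m - 1)"
proof (cases "m = 1")
  case True
  then show ?thesis by simp
next
  case False
  define k where "k = m - 1"
  have k: "k \<ge> 1" "real m = real k + 1" using False assms k_def by auto
  have "1 + 1 / real k \<le> exp (1 / real k)" by (rule exp_ge_add_one_self)
  then have "exp (- (1 / real k)) \<le> 1 / (1 + 1 / real k)"
    using k by (simp add: exp_minus divide_simps mult.commute)
  also have "1 / (1 + 1 / real k) = 1 - 1 / real m" using k by (simp add: field_simps)
  finally have h: "exp (- (1 / real k)) \<le> 1 - 1 / real m" .
  have "exp (-1) = exp (- (1 / real k)) ^ k"
    using k exp_of_nat_mult[of k "- (1 / real k)"] by simp
  also have "\<dots> \<le> (1 - 1 / real m) ^ k" by (rule power_mono[OF h]) simp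
  finally show ?thesis using k_def by simp
qed

lemma clique_le:
  assumes "finite F" "K \<subseteq> F" "\<forall>S\<in>K. \<forall>T\<in>K. S \<inter> T \<noteq> {}"
  shows "card K \<le> clique_number F"
  unfolding clique_number_def
proof (rule Max_ge)
  have "{card K |K. K \<subseteq> F \<and> (\<forall>S\<in>K. \<forall>T\<in>K. S \<inter> T \<noteq> {})} \<subseteq> card ` Pow F" by auto
  then show "finite {card K |K. K \<subseteq> F \<and> (\<forall>S\<in>K. \<forall>T\<in>K. S \<inter> T \<noteq> {})}"
    using assms(1) finite_subset by blast
  show "card K \<in> {card K |K. K \<subseteq> F \<and> (\<forall>S\<in>K. \<forall>T\<in>K. S \<inter> T \<noteq> {})}" using assms by blast
qed

lemma nice_D:
  assumes "nice_family F"
  shows "\<And>S. S \<in> F \<Longrightarrow> jordan_region S"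
    "\<And>S T p. S \<in> F \<Longrightarrow> T \<in> F \<Longrightarrow> S \<noteq> T \<Longrightarrow> p \<in> frontier S \<Longrightarrow> p \<in> frontier T
     \<Longrightarrow> curve_crosses_at (frontier S) (frontier T) p"
    "\<And>S T. S \<in> F \<Longrightarrow> T \<in> F \<Longrightarrow> S \<noteq> T \<Longrightarrow> finite (frontier S \<inter> frontier T)"
    "\<And>S T U p. S \<in> F \<Longrightarrow> T \<in> F \<Longrightarrow> U \<in> F \<Longrightarrow> S \<noteq> T \<Longrightarrow> S \<noteq> U \<Longrightarrow> T \<noteq> U
     \<Longrightarrow> p \<in> frontier S \<Longrightarrow> p \<in> frontier T \<Longrightarrow> p \<in> frontier U \<Longrightarrow> False"
proof -
  note X = assms[unfolded nice_family_def]
  have A: "\<forall>S\<in>F. jordan_region S" using X by (rule conjunct1)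
  have B: "\<forall>S\<in>F. \<forall>T\<in>F. S \<noteq> T \<longrightarrow>
        finite (frontier S \<inter> frontier T) \<and>
        (\<forall>p \<in> frontier S \<inter> frontier T. curve_crosses_at (frontier S) (frontier T) p)"
    using X by (rule conjunct1[OF conjunct2])
  have C: "\<forall>S\<in>F. \<forall>T\<in>F. \<forall>U\<in>F. S \<noteq> T \<and> S \<noteq> U \<and> T \<noteq> U \<longrightarrow>
        frontier S \<inter> frontier T \<inter> frontier U = {}"
    using X by (rule conjunct2[OF conjunct2])
  show "\<And>S. S \<in> F \<Longrightarrow> jordan_region S" using A by simp
  show "\<And>S T p. S \<in> F \<Longrightarrow> T \<in> F \<Longrightarrow> S \<noteq> T \<Longrightarrow> p \<in> frontier S \<Longrightarrow> p \<in> frontier T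
     \<Longrightarrow> curve_crosses_at (frontier S) (frontier T) p" using B by simp
  show "\<And>S T. S \<in> F \<Longrightarrow> T \<in> F \<Longrightarrow> S \<noteq> T \<Longrightarrow> finite (frontier S \<inter> frontier T)" using B by simp
  fix S T U p assume h: "S \<in> F" "T \<in> F" "U \<in> F" "S \<noteq> T" "S \<noteq> U" "T \<noteq> U"
     "p \<in> frontier S" "p \<in> frontier T" "p \<in> frontier U"
  then have "frontier S \<inter> frontier T \<inter> frontier U = {}" using C by simp
  then show False using h by blast
qed

theorem theorem1:
  fixes c :: real and F :: "complex set set"
  assumes "c > 0"
    and "finite F"
    and "nice_family F"
    and "\<And>F'. F' \<subseteq> F \<Longrightarrow> real (union_complexity F') \<le> c * real (card F')"
  shows "real (card (intersection_edges F))
           \<le> ((c * exp 1 / 2 + 1) * real (clique_number F) - 1) * real (card F)"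
proof -
  note jr = nice_D(1)[OF assms(3)]
  note cr = nice_D(2)[OF assms(3)]
  note fin2 = nice_D(3)[OF assms(3)]
  note three = nice_D(4)[OF assms(3)]
  define \<omega> where "\<omega> = clique_number F"
  define n where "n = card F"
  have cl: "\<And>K. K \<subseteq> F \<Longrightarrow> (\<forall>S\<in>K. \<forall>T\<in>K. S \<inter> T \<noteq> {}) \<Longrightarrow> card K \<le> \<omega>"
    using clique_le[OF assms(2)] \<omega>_def by blast
  have ne: "\<And>S. S \<in> F \<Longrightarrow> S \<noteq> {}" using jr jr_facts(9) by blast
  define P where "P = {{S, T} | S T. S \<in> F \<and> T \<in> F \<and> S \<noteq> T \<and> frontier S \<inter> frontier T \<noteq> {}}"
  define N where "N = {{S, T} | S T. S \<in> F \<and> T \<in> F \<and> S \<noteq> T \<and> T \<subseteq> S}"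
  have EPN: "intersection_edges F \<subseteq> P \<union> N"
  proof
    fix e assume "e \<in> intersection_edges F"
    then obtain S T where e: "e = {S, T}" "S \<in> F" "T \<in> F" "S \<noteq> T" "S \<inter> T \<noteq> {}"
      unfolding intersection_edges_def by blast
    show "e \<in> P \<union> N"
    proof (cases "frontier S \<inter> frontier T = {}")
      case True
      then have "S \<subseteq> T \<or> T \<subseteq> S" using nested[OF jr[OF e(2)] jr[OF e(3)] e(5)] by blast
      then show ?thesis
      proof
        assume "S \<subseteq> T"
        then have "{T, S} \<in> N" unfolding N_def using e by blast
        then show ?thesis using e(1) by (simp add: insert_commute)
      next
        assume "T \<subseteq> S"
        then have "{S, T} \<in> N" unfolding N_def using e by blast
        then show ?thesis using e(1) by simp
      qed
    next
      case False
      then show ?thesis unfolding P_def using e by blast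
    qed
  qed
  have finP: "finite P" "finite N"
  proof -
    have "P \<subseteq> Pow F" "N \<subseteq> Pow F" unfolding P_def N_def by auto
    then show "finite P" "finite N" using assms(2) finite_subset by (metis finite_Pow_iff)+
  qed
  have cardE: "card (intersection_edges F) \<le> card P + card N"
    using card_mono[OF _ EPN] finP card_Un_le[of P N] by (meson finite_UnI le_trans)
  have cardN: "card N \<le> (\<omega> - 1) * n"
  proof -
    define G where "G T = {S \<in> F. S \<noteq> T \<and> T \<subseteq> S}" for T
    have "N \<subseteq> (\<Union>T\<in>F. (\<lambda>S. {S, T}) ` G T)" unfolding N_def G_def by blast
    then have "card N \<le> card (\<Union>T\<in>F. (\<lambda>S. {S, T}) ` G T)"
      using assms(2) G_def by (intro card_mono) auto
    also have "\<dots> \<le> (\<Sum>T\<in>F. card ((\<lambda>S. {S, T}) ` G T))" by (rule card_UN_le[OF assms(2)])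
    also have "\<dots> \<le> (\<Sum>T\<in>F. \<omega> - 1)"
    proof (intro sum_mono)
      fix T assume T: "T \<in> F"
      have fG: "finite (G T)" using assms(2) G_def by auto
      have "insert T (G T) \<subseteq> F" using T G_def by auto
      moreover have "\<forall>S1\<in>insert T (G T). \<forall>S2\<in>insert T (G T). S1 \<inter> S2 \<noteq> {}"
        using ne[OF T] G_def by blast
      ultimately have "card (insert T (G T)) \<le> \<omega>" using cl by blast
      then have "card (G T) \<le> \<omega> - 1" using fG G_def by simp
      then show "card ((\<lambda>S. {S, T}) ` G T) \<le> \<omega> - 1" using card_image_le[OF fG] le_trans by blast
    qed
    also have "\<dots> = (\<omega> - 1) * n" using n_def by simp
    finally show ?thesis .
  qed
  define V where "V = {p. \<exists>S\<in>F. \<exists>T\<in>F. S \<noteq> T \<and> p \<in> frontier S \<and> p \<in> frontier T}"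
  have finV: "finite V"
  proof -
    have "V = (\<Union>S\<in>F. \<Union>T\<in>F - {S}. frontier S \<inter> frontier T)" unfolding V_def by blast
    moreover have "finite (\<Union>S\<in>F. \<Union>T\<in>F - {S}. frontier S \<inter> frontier T)"
      using assms(2) fin2 by (intro finite_UN_I) auto
    ultimately show ?thesis by simp
  qed
  have cardP: "2 * card P \<le> card V"
  proof -
    define X where "X e = \<Inter> (frontier ` e)" for e :: "complex set set"
    have XP: "X e \<subseteq> V \<and> finite (X e) \<and> 2 \<le> card (X e)" if eP: "e \<in> P" for e
    proof -
      obtain S T where e: "e = {S, T}" "S \<in> F" "T \<in> F" "S \<noteq> T" "frontier S \<inter> frontier T \<noteq> {}"
        using eP unfolding P_def by blast
      have Xe: "X e = frontier S \<inter> frontier T" using e(1) X_def by auto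
      obtain p where p: "p \<in> frontier S" "p \<in> frontier T" using e(5) by blast
      obtain p' where p': "p' \<in> X e" "p' \<noteq> p"
      proof (rule ccontr)
        assume "\<not> thesis"
        then have "frontier S \<inter> frontier T \<subseteq> {p}" using that Xe by blast
        then show False using cross_two[OF cr[OF e(2,3,4) p]] by blast
      qed
      have fin: "finite (X e)" using Xe fin2[OF e(2,3,4)] by simp
      have "card {p, p'} \<le> card (X e)" using fin p p' Xe by (intro card_mono) auto
      then have "2 \<le> card (X e)" using p'(2) by simp
      moreover have "X e \<subseteq> V" using Xe e unfolding V_def by blast
      ultimately show ?thesis using fin by blast
    qed
    have disj: "X e \<inter> X e' = {}" if eP: "e \<in> P" "e' \<in> P" "e \<noteq> e'" for e e'
    proof (rule ccontr)
      assume "X e \<inter> X e' \<noteq> {}"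
      then obtain p where p: "p \<in> X e" "p \<in> X e'" by blast
      obtain S T where e: "e = {S, T}" "S \<in> F" "T \<in> F" "S \<noteq> T"
        using eP(1) unfolding P_def by blast
      obtain S' T' where e': "e' = {S', T'}" "S' \<in> F" "T' \<in> F" "S' \<noteq> T'"
        using eP(2) unfolding P_def by blast
      have pp: "p \<in> frontier S" "p \<in> frontier T" "p \<in> frontier S'" "p \<in> frontier T'"
        using p e e' X_def by auto
      have "S' \<notin> {S, T} \<or> T' \<notin> {S, T}"
      proof (rule ccontr)
        assume "\<not> (S' \<notin> {S, T} \<or> T' \<notin> {S, T})"
        then have "S' \<in> {S, T}" "T' \<in> {S, T}" by simp_all
        then have "(S' = S \<and> T' = T) \<or> (S' = T \<and> T' = S)" using e'(4) by blast
        then have "e' = e" using e(1) e'(1) by (auto simp: insert_commute)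
        then show False using eP(3) by simp
      qed
      then show False
      proof
        assume h: "S' \<notin> {S, T}"
        then have "S \<noteq> S'" "T \<noteq> S'" by auto
        then show False by (rule three[OF e(2,3) e'(2) e(4) _ _ pp(1,2,3)])
      next
        assume h: "T' \<notin> {S, T}"
        then have "S \<noteq> T'" "T \<noteq> T'" by auto
        then show False by (rule three[OF e(2,3) e'(3) e(4) _ _ pp(1,2,4)])
      qed
    qed
    have "2 * card P = (\<Sum>e\<in>P. 2)" by simp
    also have "\<dots> \<le> (\<Sum>e\<in>P. card (X e))" using XP by (intro sum_mono) blast
    also have "\<dots> = card (\<Union>e\<in>P. X e)" using finP(1) XP disj by (intro card_UN_disjoint[symmetric]) auto
    also have "\<dots> \<le> card V" using XP finV by (intro card_mono) auto
    finally show ?thesis .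
  qed
  have CS: "real (card V) \<le> c * real n * real (\<omega> - 1) * exp 1" if w2: "\<omega> \<ge> 2"
  proof -
    define m where "m = \<omega> - 1"
    have m1: "m \<ge> 1" using w2 m_def by simp
    define q :: real where "q = 1 / real m"
    have q: "0 < q" "q \<le> 1" using m1 q_def by auto
    define pr where "pr p = (SOME ST. fst ST \<in> F \<and> snd ST \<in> F \<and> fst ST \<noteq> snd ST \<and> p \<in> frontier (fst ST) \<and> p \<in> frontier (snd ST))" for p
    have prp: "fst (pr p) \<in> F \<and> snd (pr p) \<in> F \<and> fst (pr p) \<noteq> snd (pr p) \<and> p \<in> frontier (fst (pr p)) \<and> p \<in> frontier (snd (pr p))" if "p \<in> V" for p
    proof -
      from that obtain S T where "S \<in> F" "T \<in> F" "S \<noteq> T" "p \<in> frontier S" "p \<in> frontier T" unfolding V_def by blast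
      then have "\<exists>ST. fst ST \<in> F \<and> snd ST \<in> F \<and> fst ST \<noteq> snd ST \<and> p \<in> frontier (fst ST) \<and> p \<in> frontier (snd ST)"
        by (intro exI[of _ "(S, T)"]) simp
      then show ?thesis unfolding pr_def by (rule someI_ex)
    qed
    define A where "A p = {fst (pr p), snd (pr p)}" for p
    define D where "D p = {U \<in> F. p \<in> U} - A p" for p
    define w where "w R = q ^ card R * (1 - q) ^ card (F - R)" for R
    define ind where "ind p R = (of_bool (A p \<subseteq> R \<and> D p \<inter> R = {}) :: real)" for p R
    have AF: "A p \<subseteq> F" "D p \<subseteq> F" "A p \<inter> D p = {}" "card (A p) = 2" if "p \<in> V" for p
      using prp[OF that] unfolding A_def D_def by auto
    have cardD: "card (D p) \<le> m - 1" if "p \<in> V" for p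
    proof -
      have sub: "A p \<union> D p = {U \<in> F. p \<in> U}" using prp[OF that] jr jr_facts(7) unfolding A_def D_def by blast
      have "card (A p \<union> D p) \<le> \<omega>" unfolding sub by (intro cl) auto
      moreover have "card (A p \<union> D p) = card (A p) + card (D p)"
        using AF[OF that] assms(2) finite_subset by (intro card_Un_disjoint) auto
      ultimately show ?thesis using AF(4)[OF that] m_def by simp
    qed
    have good: "real (card {p \<in> V. A p \<subseteq> R \<and> D p \<inter> R = {}}) \<le> real (union_complexity R)" if R: "R \<subseteq> F" for R
    proof -
      have finR: "finite R" using R assms(2) finite_subset by blast
      have jrR: "\<And>U. U \<in> R \<Longrightarrow> jordan_region U" using R jr by blast
      have "{p \<in> V. A p \<subseteq> R \<and> D p \<inter> R = {}} \<subseteq> {p. (\<exists>S\<in>R. \<exists>T\<in>R. S \<noteq> T \<and> p \<in> frontier S \<and> p \<in> frontier T) \<and> p \<in> frontier (\<Union>R)}"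
      proof
        fix p assume p: "p \<in> {p \<in> V. A p \<subseteq> R \<and> D p \<inter> R = {}}"
        define S where "S = fst (pr p)"
        define T where "T = snd (pr p)"
        have pV: "p \<in> V" using p by blast
        have ST: "S \<in> R" "T \<in> R" "S \<noteq> T" "p \<in> frontier S" "p \<in> frontier T" "S \<in> F" "T \<in> F"
          using p prp[OF pV] unfolding S_def T_def A_def by auto
        have oth: "U = S \<or> U = T" if "U \<in> R" "p \<in> U" for U
          using p that R unfolding D_def A_def S_def T_def by blast
        have "p \<in> frontier (\<Union>R)"
          by (rule cross_union[OF finR jrR ST(1,2,4) cr[OF ST(6,7,3,4,5)] oth])
        then show "p \<in> {p. (\<exists>S\<in>R. \<exists>T\<in>R. S \<noteq> T \<and> p \<in> frontier S \<and> p \<in> frontier T) \<and> p \<in> frontier (\<Union>R)}"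
          using ST by blast
      qed
      moreover have "finite {p. (\<exists>S\<in>R. \<exists>T\<in>R. S \<noteq> T \<and> p \<in> frontier S \<and> p \<in> frontier T) \<and> p \<in> frontier (\<Union>R)}"
        by (rule finite_subset[OF _ finV]) (use R in \<open>auto simp: V_def\<close>)
      ultimately show ?thesis unfolding union_complexity_def by (simp add: card_mono)
    qed
    have wnn: "w R \<ge> 0" for R using q unfolding w_def by simp
    have sw: "(\<Sum>R\<in>Pow F. w R * ind p R) = q ^ 2 * (1 - q) ^ card (D p)" if "p \<in> V" for p
      using wsum[OF assms(2) AF(1,2,3)[OF that], of q] AF(4)[OF that] unfolding w_def ind_def by (simp add: of_bool_def)
    have swc: "(\<Sum>R\<in>Pow F. w R * real (card R)) = real n * q"
    proof -
      have "(\<Sum>R\<in>Pow F. w R * real (card R)) = (\<Sum>R\<in>Pow F. \<Sum>x\<in>F. w R * (if {x} \<subseteq> R \<and> {} \<inter> R = {} then 1 else 0))"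
      proof (intro sum.cong refl)
        fix R assume R: "R \<in> Pow F"
        have "(\<Sum>x\<in>F. (if {x} \<subseteq> R \<and> {} \<inter> R = {} then 1 else 0)) = (\<Sum>x\<in>F. (of_bool (x \<in> R) :: real))"
          by (intro sum.cong refl) simp
        also have "\<dots> = real (card (F \<inter> {x. x \<in> R}))" using assms(2) by simp
        also have "F \<inter> {x. x \<in> R} = R" using R by auto
        finally show "w R * real (card R) = (\<Sum>x\<in>F. w R * (if {x} \<subseteq> R \<and> {} \<inter> R = {} then 1 else 0))"
          by (simp add: sum_distrib_left[symmetric])
      qed
      also have "\<dots> = (\<Sum>x\<in>F. \<Sum>R\<in>Pow F. w R * (if {x} \<subseteq> R \<and> {} \<inter> R = {} then 1 else 0))" by (rule sum.swap)
      also have "\<dots> = (\<Sum>x\<in>F. q)"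
      proof (intro sum.cong refl)
        fix x assume "x \<in> F"
        then show "(\<Sum>R\<in>Pow F. w R * (if {x} \<subseteq> R \<and> {} \<inter> R = {} then 1 else 0)) = q"
          using wsum[OF assms(2), of "{x}" "{}" q] unfolding w_def by simp
      qed
      also have "\<dots> = real n * q" using n_def by simp
      finally show ?thesis .
    qed
    have "real (card V) * (q ^ 2 * (1 - q) ^ (m - 1)) = (\<Sum>p\<in>V. q ^ 2 * (1 - q) ^ (m - 1))" by simp
    also have "\<dots> \<le> (\<Sum>p\<in>V. q ^ 2 * (1 - q) ^ card (D p))"
      using q cardD by (intro sum_mono mult_left_mono power_decreasing) auto
    also have "\<dots> = (\<Sum>p\<in>V. \<Sum>R\<in>Pow F. w R * ind p R)" using sw by simp
    also have "\<dots> = (\<Sum>R\<in>Pow F. \<Sum>p\<in>V. w R * ind p R)" by (rule sum.swap)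
    also have "\<dots> = (\<Sum>R\<in>Pow F. w R * real (card {p \<in> V. A p \<subseteq> R \<and> D p \<inter> R = {}}))"
    proof (intro sum.cong refl)
      fix R
      have "(\<Sum>p\<in>V. ind p R) = real (card (V \<inter> {p. A p \<subseteq> R \<and> D p \<inter> R = {}}))"
        unfolding ind_def using finV by simp
      also have "V \<inter> {p. A p \<subseteq> R \<and> D p \<inter> R = {}} = {p \<in> V. A p \<subseteq> R \<and> D p \<inter> R = {}}" by blast
      finally show "(\<Sum>p\<in>V. w R * ind p R) = w R * real (card {p \<in> V. A p \<subseteq> R \<and> D p \<inter> R = {}})"
        by (simp add: sum_distrib_left[symmetric])
    qed
    also have "\<dots> \<le> (\<Sum>R\<in>Pow F. w R * (c * real (card R)))"
    proof (intro sum_mono mult_left_mono wnn)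
      fix R assume "R \<in> Pow F"
      then show "real (card {p \<in> V. A p \<subseteq> R \<and> D p \<inter> R = {}}) \<le> c * real (card R)"
        using good assms(4) by (meson PowD order_trans)
    qed
    also have "\<dots> = c * (\<Sum>R\<in>Pow F. w R * real (card R))"
      by (simp add: sum_distrib_left mult.left_commute)
    also have "\<dots> = c * (real n * q)" using swc by simp
    finally have main: "real (card V) * (q ^ 2 * (1 - q) ^ (m - 1)) \<le> c * (real n * q)" .
    have eb: "exp (-1) \<le> (1 - q) ^ (m - 1)" using exp_bound[OF m1] q_def by simp
    have "real (card V) * (q ^ 2 * exp (-1)) \<le> real (card V) * (q ^ 2 * (1 - q) ^ (m - 1))"
      using eb q by (intro mult_left_mono) auto
    then have "real (card V) * (q ^ 2 * exp (-1)) \<le> c * (real n * q)" using main by linarith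
    then have "real (card V) * q * exp (-1) \<le> c * real n" using q by (simp add: power2_eq_square field_simps)
    then have "real (card V) \<le> c * real n * real m * exp 1"
      using m1 q_def by (simp add: exp_minus field_simps)
    then show ?thesis using m_def by simp
  qed
  have "real (card (intersection_edges F)) \<le> real (card P + card N)" using cardE by (rule of_nat_mono)
  then have E0: "real (card (intersection_edges F)) \<le> real (card P) + real (card N)" by simp
  show ?thesis
  proof (cases "\<omega> \<ge> 2")
    case True
    have ep: "exp 1 > (0::real)" by simp
    have w1: "real (\<omega> - 1) = real \<omega> - 1" using True by simp
    have "real (2 * card P) \<le> real (card V)" using cardP by (rule of_nat_mono)
    then have v1: "2 * real (card P) \<le> real (card V)" by simp
    have v2: "real (card V) \<le> c * real n * (real \<omega> - 1) * exp 1" using CS[OF True] w1 by simp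
    have p1: "real (card P) \<le> c * real n * (real \<omega> - 1) * exp 1 / 2"
      using v1 v2 by linarith
    have "real (card N) \<le> real ((\<omega> - 1) * n)" using cardN by (rule of_nat_mono)
    then have n1: "real (card N) \<le> (real \<omega> - 1) * real n" using w1 by simp
    have eq: "((c * exp 1 / 2 + 1) * real \<omega> - 1) * real n
       = c * real n * (real \<omega> - 1) * exp 1 / 2 + (real \<omega> - 1) * real n + c * exp 1 * real n / 2"
      by (simp add: field_simps)
    have "c * exp 1 * real n / 2 \<ge> 0" using assms(1) ep by simp
    then show ?thesis using E0 p1 n1 eq unfolding \<omega>_def[symmetric] n_def[symmetric] by linarith
  next
    case False
    have "intersection_edges F = {}"
    proof (rule ccontr)
      assume "intersection_edges F \<noteq> {}"
      then obtain S T where e: "S \<in> F" "T \<in> F" "S \<noteq> T" "S \<inter> T \<noteq> {}"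
        unfolding intersection_edges_def by blast
      have "card {S, T} \<le> \<omega>" using e ne by (intro cl) auto
      then show False using e(3) False by simp
    qed
    moreover have "0 \<le> ((c * exp 1 / 2 + 1) * real \<omega> - 1) * real n"
    proof (cases "F = {}")
      case True then show ?thesis using n_def by simp
    next
      case False
      then obtain S where S: "S \<in> F" by blast
      have "card {S} \<le> \<omega>" using S ne by (intro cl) auto
      then have "1 \<le> real \<omega>" by simp
      moreover have "0 \<le> c * exp 1 / 2" using assms(1) by simp
      ultimately have "1 * real \<omega> \<le> (c * exp 1 / 2 + 1) * real \<omega>"
        by (intro mult_right_mono) auto
      then have "0 \<le> (c * exp 1 / 2 + 1) * real \<omega> - 1" using \<open>1 \<le> real \<omega>\<close> by linarith
      then show ?thesis by simp
    qed
    ultimately show ?thesis using \<omega>_def n_def by simp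
  qed
qed

end
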